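(* Suppose $\psi\in\Psi^*$, $s,s'\in\Omega_2$ and $|s-s'|\le(\mathcal{L}\log\mathcal{L})^{-1}$. Then $$\frac{F(s,\psi)}{F(s',\psi)}=1+O\big(|s-s'|\mathcal{L}\log\mathcal{L}\big).$$
   Context: Standing conventions: $\chi$ is a real primitive Dirichlet character of modulus $D$, where $D$ exceeds a sufficiently large absolute constant; implied constants are absolute. $\mathcal{L}=\log D$, $Q=\exp(\mathcal{L}^2)$, $\alpha=\mathcal{L}^{-2}$, $s_0=\tfrac12+iD$. Let $\mathcal{Q}$ be the set of integers $q$ with $Q<q<2Q$, $\gcd(q,6)=1$, $q$ squarefree; $\Psi_q$ the set of primitive characters $\psi\bmod q$ with $\psi\chi$ primitive modulo $\mathrm{lcm}(q,D)$; $\Psi=\bigcup_q\Psi_q$. Define $\nu,\upsilon$ by $\sum\nu(n)n^{-s}=\zeta(s)L(s,\chi)$, $\sum\upsilon(n)n^{-s}=\zeta(s)^{-1}L(s,\chi)^{-1}$; $F(s,\psi)=\sum_{n\le D^5}\nu(n)\psi(n)n^{-s}$, $G(s,\psi)=\sum_{n\le D^5}\upsilon(n)\psi(n)n^{-s}$; $\Delta(s,\psi)=L(s,\psi)/L(1-s,\bar\psi)$, $\Delta_1(s,\psi)=\Delta(s,\psi)\Delta(s,\psi\chi)$, $\mathcal{F}(s,\psi)=F(s,\psi)+\Delta_1(s,\psi)F(1-s,\bar\psi)$. $\Omega_1=\{s:-2\alpha^{1/2}<\mathrm{Re}(s-s_0)<1,\ |\mathrm{Im}(s-s_0)|<1+20\mathcal{L}\}$,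 $\Omega_2=\{s:-\tfrac1{10}\alpha\log\mathcal{L}<\mathrm{Re}(s-s_0)<\tfrac12,\ |\mathrm{Im}(s-s_0)|<1+10\mathcal{L}\}$. $\Psi^*$ is the set of $\psi\in\Psi$ with (I1) $\sup_{\Omega_1}\{|F|+|G|\}<\mathcal{L}^3\log\mathcal{L}$, (I2) $\sup_{\Omega_1}|FG-1|<\tfrac12$, (I3) $\sup_{\Omega_2}|L(s,\psi)L(s,\psi\chi)-\mathcal{F}(s,\psi)|<\mathcal{L}^{-24/5}$. *)

theory Defs
  imports "HOL-Complex_Analysis.Complex_Analysis" "HOL-Computational_Algebra.Squarefree"
          "HOL-Number_Theory.Cong"
begin

definition dchar :: "nat \<Rightarrow> (nat \<Rightarrow> complex) \<Rightarrow> bool" where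
  "dchar q \<psi> \<longleftrightarrow> q > 0 \<and> (\<forall>m n. \<psi> (m * n) = \<psi> m * \<psi> n)
      \<and> (\<forall>n. \<psi> (n + q) = \<psi> n) \<and> (\<forall>n. \<psi> n = 0 \<longleftrightarrow> \<not> coprime n q)"

text \<open>Primitive: no proper divisor d of q is an induced modulus.\<close>
definition primitive_dchar :: "nat \<Rightarrow> (nat \<Rightarrow> complex) \<Rightarrow> bool" where
  "primitive_dchar q \<psi> \<longleftrightarrow> dchar q \<psi> \<and>
     (\<forall>d. d dvd q \<and> d < q \<longrightarrow> \<not> (\<forall>n. coprime n q \<and> [n = 1] (mod d) \<longrightarrow> \<psi> n = 1))"

definition real_primitive_dchar :: "nat \<Rightarrow> (nat \<Rightarrow> complex) \<Rightarrow> bool" where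
  "real_primitive_dchar D chi \<longleftrightarrow> primitive_dchar D chi \<and> (\<forall>n. chi n \<in> \<real>)"

definition cnj_char :: "(nat \<Rightarrow> complex) \<Rightarrow> nat \<Rightarrow> complex" where
  "cnj_char \<psi> n = cnj (\<psi> n)"

definition mult_char :: "(nat \<Rightarrow> complex) \<Rightarrow> (nat \<Rightarrow> complex) \<Rightarrow> nat \<Rightarrow> complex" where
  "mult_char \<psi> chi n = \<psi> n * chi n"

text \<open>For a non-principal primitive character, L(s,psi) is the (unique) entire function
  agreeing with the Dirichlet series on Re s > 1.\<close>
definition Lfun :: "complex \<Rightarrow> (nat \<Rightarrow> complex) \<Rightarrow> complex" where
  "Lfun s \<psi> = (THE f. f holomorphic_on UNIV \<and>
      (\<forall>z. Re z > 1 \<longrightarrow> f z = (\<Sum>n. \<psi> (Suc n) * of_nat (Suc n) powr (- z)))) s"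

text \<open>Delta(s,psi) = L(s,psi)/L(1-s,conj psi), taken as a meromorphic function, i.e.\ its value
  is the limit of the quotient (removable singularities at zeros of the denominator).\<close>
definition Delta :: "complex \<Rightarrow> (nat \<Rightarrow> complex) \<Rightarrow> complex" where
  "Delta s \<psi> = Lim (at s) (\<lambda>z. Lfun z \<psi> / Lfun (1 - z) (cnj_char \<psi>))"

definition Delta1 :: "(nat \<Rightarrow> complex) \<Rightarrow> complex \<Rightarrow> (nat \<Rightarrow> complex) \<Rightarrow> complex" where
  "Delta1 chi s \<psi> = Delta s \<psi> * Delta s (mult_char \<psi> chi)"

definition moebius :: "nat \<Rightarrow> int" where
  "moebius n = (if n > 0 \<and> squarefree n then (-1) ^ card (prime_factors n) else 0)"

text \<open>zeta(s) L(s,chi) = sum nu(n) n^-s, i.e. nu = 1 * chi (Dirichlet convolution).\<close>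
definition nu :: "(nat \<Rightarrow> complex) \<Rightarrow> nat \<Rightarrow> complex" where
  "nu chi n = (\<Sum>d | d dvd n. chi d)"

text \<open>zeta(s)^-1 L(s,chi)^-1 = sum upsilon(n) n^-s, i.e. upsilon = mu * (mu chi).\<close>
definition upsilon :: "(nat \<Rightarrow> complex) \<Rightarrow> nat \<Rightarrow> complex" where
  "upsilon chi n = (\<Sum>d | d dvd n. of_int (moebius d) * of_int (moebius (n div d)) * chi (n div d))"

definition LL :: "nat \<Rightarrow> real" where "LL D = ln (real D)"
definition QQ :: "nat \<Rightarrow> real" where "QQ D = exp (LL D ^ 2)"
definition alpha :: "nat \<Rightarrow> real" where "alpha D = LL D powr (-2)"
definition s0 :: "nat \<Rightarrow> complex" where "s0 D = Complex (1/2) (real D)"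

definition Fpol :: "nat \<Rightarrow> (nat \<Rightarrow> complex) \<Rightarrow> complex \<Rightarrow> (nat \<Rightarrow> complex) \<Rightarrow> complex" where
  "Fpol D chi s \<psi> = (\<Sum>n\<in>{1..D^5}. nu chi n * \<psi> n * of_nat n powr (- s))"

definition Gpol :: "nat \<Rightarrow> (nat \<Rightarrow> complex) \<Rightarrow> complex \<Rightarrow> (nat \<Rightarrow> complex) \<Rightarrow> complex" where
  "Gpol D chi s \<psi> = (\<Sum>n\<in>{1..D^5}. upsilon chi n * \<psi> n * of_nat n powr (- s))"

definition FF :: "nat \<Rightarrow> (nat \<Rightarrow> complex) \<Rightarrow> complex \<Rightarrow> (nat \<Rightarrow> complex) \<Rightarrow> complex" where
  "FF D chi s \<psi> = Fpol D chi s \<psi> + Delta1 chi s \<psi> * Fpol D chi (1 - s) (cnj_char \<psi>)"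

definition Omega1 :: "nat \<Rightarrow> complex set" where
  "Omega1 D = {s. - 2 * sqrt (alpha D) < Re (s - s0 D) \<and> Re (s - s0 D) < 1
                 \<and> \<bar>Im (s - s0 D)\<bar> < 1 + 20 * LL D}"

definition Omega2 :: "nat \<Rightarrow> complex set" where
  "Omega2 D = {s. - (1/10) * alpha D * ln (LL D) < Re (s - s0 D) \<and> Re (s - s0 D) < 1/2
                 \<and> \<bar>Im (s - s0 D)\<bar> < 1 + 10 * LL D}"

definition Qset :: "nat \<Rightarrow> nat set" where
  "Qset D = {q. QQ D < real q \<and> real q < 2 * QQ D \<and> coprime q 6 \<and> squarefree q}"

definition Psi_q :: "nat \<Rightarrow> (nat \<Rightarrow> complex) \<Rightarrow> nat \<Rightarrow> (nat \<Rightarrow> complex) set" where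
  "Psi_q D chi q = {\<psi>. primitive_dchar q \<psi> \<and> primitive_dchar (lcm q D) (mult_char \<psi> chi)}"

definition Psi :: "nat \<Rightarrow> (nat \<Rightarrow> complex) \<Rightarrow> (nat \<Rightarrow> complex) set" where
  "Psi D chi = (\<Union>q\<in>Qset D. Psi_q D chi q)"

definition PsiStar :: "nat \<Rightarrow> (nat \<Rightarrow> complex) \<Rightarrow> (nat \<Rightarrow> complex) set" where
  "PsiStar D chi = {\<psi> \<in> Psi D chi.
     (SUP s\<in>Omega1 D. cmod (Fpol D chi s \<psi>) + cmod (Gpol D chi s \<psi>)) < LL D ^ 3 * ln (LL D)
   \<and> (SUP s\<in>Omega1 D. cmod (Fpol D chi s \<psi> * Gpol D chi s \<psi> - 1)) < 1/2
   \<and> (SUP s\<in>Omega2 D. cmod (Lfun s \<psi> * Lfun s (mult_char \<psi> chi) - FF D chi s \<psi>)) < LL D powr (-24/5)}"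

end

theory Submission
  imports Defs
begin


lemma exp_sub1_bound: "cmod (exp w - 1) \<le> exp (cmod w) * cmod w"
proof -
  have "cmod (exp w - exp 0) \<le> exp (cmod w) * cmod (w - 0)"
  proof (rule field_differentiable_bound[where S="cball 0 (cmod w)" and f'=exp])
    fix z assume "z \<in> cball (0::complex) (cmod w)"
    then have "cmod z \<le> cmod w" by simp
    then show "cmod (exp z) \<le> exp (cmod w)"
      using abs_Re_le_cmod[of z] by (simp add: norm_exp_eq_Re)
  qed (auto intro: DERIV_exp has_field_derivative_at_within)
  then show ?thesis by simp
qed

lemma Fpol_holo: "(\<lambda>s. Fpol D chi s \<psi>) holomorphic_on A"
  unfolding Fpol_def
  by (intro holomorphic_on_sum holomorphic_intros holomorphic_on_powr_right) auto

lemma Gpol_holo: "(\<lambda>s. Gpol D chi s \<psi>) holomorphic_on A"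
  unfolding Gpol_def
  by (intro holomorphic_on_sum holomorphic_intros holomorphic_on_powr_right) auto

lemma Omega1_eq: "Omega1 D = {s. - 2 * sqrt (alpha D) + 1/2 < Re s} \<inter> {s. Re s < 3/2}
   \<inter> {s. Im s < real D + 1 + 20 * LL D} \<inter> {s. real D - (1 + 20 * LL D) < Im s}"
  unfolding Omega1_def s0_def by auto

lemma Omega2_eq: "Omega2 D = {s. - (1/10) * alpha D * ln (LL D) + 1/2 < Re s} \<inter> {s. Re s < 1}
   \<inter> {s. Im s < real D + 1 + 10 * LL D} \<inter> {s. real D - (1 + 10 * LL D) < Im s}"
  unfolding Omega2_def s0_def by auto

lemma Omega1_open: "open (Omega1 D)"
  unfolding Omega1_eq
  by (intro open_Int open_halfspace_Re_gt open_halfspace_Re_lt open_halfspace_Im_gt open_halfspace_Im_lt)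

lemma Omega1_convex: "convex (Omega1 D)"
  unfolding Omega1_eq
  by (intro convex_Int convex_halfspace_Re_gt convex_halfspace_Re_lt convex_halfspace_Im_gt convex_halfspace_Im_lt)

lemma Omega2_convex: "convex (Omega2 D)"
  unfolding Omega2_eq
  by (intro convex_Int convex_halfspace_Re_gt convex_halfspace_Re_lt convex_halfspace_Im_gt convex_halfspace_Im_lt)

lemma Omega1_bounded: "bounded (Omega1 D)"
proof -
  have "Omega1 D \<subseteq> cball (s0 D) (2 * sqrt (alpha D) + 1 + 1 + 20 * LL D)"
  proof
    fix s assume s: "s \<in> Omega1 D"
    have sq: "0 \<le> sqrt (alpha D)" by (simp add: alpha_def)
    have a: "- 2 * sqrt (alpha D) < Re (s - s0 D)" "Re (s - s0 D) < 1"
        "\<bar>Im (s - s0 D)\<bar> < 1 + 20 * LL D"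
      using s unfolding Omega1_def by auto
    have "\<bar>Re (s - s0 D)\<bar> \<le> 2 * sqrt (alpha D) + 1"
      unfolding abs_le_iff using a(1,2) sq by linarith
    then show "s \<in> cball (s0 D) (2 * sqrt (alpha D) + 1 + 1 + 20 * LL D)"
      using cmod_le[of "s - s0 D"] a(3) by (simp add: dist_norm norm_minus_commute)
  qed
  then show ?thesis using bounded_cball bounded_subset by blast
qed

lemma bdd_cont:
  assumes "continuous_on UNIV (f :: complex \<Rightarrow> real)"
  shows "bdd_above (f ` Omega1 D)"
proof -
  have "compact (f ` closure (Omega1 D))"
    by (intro compact_continuous_image continuous_on_subset[OF assms])
       (auto simp: Omega1_bounded compact_closure)
  then have "bounded (f ` closure (Omega1 D))" by (rule compact_imp_bounded)
  then have "bdd_above (f ` closure (Omega1 D))" by (rule bounded_imp_bdd_above)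
  then show ?thesis by (rule bdd_above_mono) (use closure_subset in auto)
qed

lemma deriv_bound:
  assumes hol: "f holomorphic_on S" and S: "open S" and sub: "cball z r \<subseteq> S" and r: "r > 0"
    and A: "A > 0" and re: "\<And>w. w \<in> cball z r \<Longrightarrow> Re (f w - f z) \<le> A"
  shows "cmod (deriv f z) \<le> 2 * A / r"
proof -
  define u where "u w = f w - f z" for w
  define c where "c = 2 * complex_of_real A"
  define h where "h w = u w / (c - u w)" for w
  have den: "c - u w \<noteq> 0" if "w \<in> cball z r" for w
  proof
    assume "c - u w = 0"
    then have "u w = c" by simp
    then have "Re (u w) = 2 * A" by (simp add: c_def)
    with re[OF that] A show False unfolding u_def by simp
  qed
  have z: "z \<in> cball z r" using r by simp
  have hu: "(u has_field_derivative deriv f w) (at w)" if "w \<in> S" for w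
  proof -
    have "(f has_field_derivative deriv f w) (at w)" by (rule holomorphic_derivI[OF hol S that])
    then have "((\<lambda>w. f w - f z) has_field_derivative deriv f w - 0) (at w)"
      by (intro DERIV_diff DERIV_const)
    then show ?thesis by (simp add: u_def[abs_def])
  qed
  have hh: "(h has_field_derivative ((deriv f w * (c - u w) - u w * (0 - deriv f w)) / ((c - u w) * (c - u w)))) (at w)"
    if "w \<in> cball z r" for w
  proof -
    have "w \<in> S" using that sub by blast
    note d = hu[OF this]
    have "((\<lambda>w. c - u w) has_field_derivative 0 - deriv f w) (at w)"
      by (intro DERIV_diff DERIV_const d)
    from DERIV_divide[OF d this den[OF that]] show ?thesis by (simp add: h_def[abs_def])
  qed
  have "deriv h z = (deriv f z * (c - u z) - u z * (0 - deriv f z)) / ((c - u z) * (c - u z))"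
    by (rule DERIV_imp_deriv[OF hh[OF z]])
  also have "\<dots> = deriv f z / c" using A
    by (simp add: u_def c_def)
  finally have dh: "deriv h z = deriv f z / c" .
  have holh: "h holomorphic_on ball z r"
    unfolding holomorphic_on_def using hh
    by (meson ball_subset_cball field_differentiable_at_within field_differentiable_def subsetD)
  have conth: "continuous_on (cball z r) h"
    by (rule continuous_at_imp_continuous_on) (use hh DERIV_isCont in blast)
  have bd: "cmod (h w) \<le> 1" if "norm (z - w) = r" for w
  proof -
    have w: "w \<in> cball z r" using that by (simp add: dist_norm)
    have reu: "Re (u w) \<le> A" using re[OF w] unfolding u_def .
    have e1: "(cmod (u w))^2 = Re (u w)^2 + Im (u w)^2" by (simp add: cmod_power2)
    have e2: "(cmod (c - u w))^2 = (2 * A - Re (u w))^2 + Im (u w)^2" by (simp add: cmod_power2 c_def)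
    have "0 \<le> 4 * A * (A - Re (u w))" using A reu by simp
    then have "(cmod (u w))^2 \<le> (cmod (c - u w))^2"
      unfolding e1 e2 by (simp add: power2_eq_square algebra_simps)
    then have le: "cmod (u w) \<le> cmod (c - u w)"
      by (rule power2_le_imp_le) simp
    have "cmod (c - u w) > 0" using den[OF w] by simp
    then show ?thesis unfolding h_def norm_divide using le by simp
  qed
  have "cmod ((deriv ^^ 1) h z) \<le> fact 1 * 1 / r ^ 1"
    by (rule Cauchy_inequality[OF holh conth r bd])
  then have "cmod (deriv f z) / (2 * A) \<le> 1 / r"
    using A by (simp add: dh norm_divide c_def)
  then show ?thesis using A r by (simp add: field_simps)
qed



lemma alpha_eq: "LL D > 0 \<Longrightarrow> alpha D = 1 / (LL D)^2"
  unfolding alpha_def by (simp add: powr_minus powr_realpow divide_inverse)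

lemma cball_sub:
  assumes L: "LL D \<ge> 3" and z: "z \<in> Omega2 D"
  shows "cball z (1 / LL D) \<subseteq> Omega1 D"
proof
  fix w assume w: "w \<in> cball z (1 / LL D)"
  define L where "L = LL D"
  have Lp: "L > 0" using L L_def by simp
  have dw: "\<bar>Re (w - z)\<bar> \<le> 1 / L" "\<bar>Im (w - z)\<bar> \<le> 1 / L"
    using w abs_Re_le_cmod[of "w - z"] abs_Im_le_cmod[of "w - z"]
    by (auto simp: dist_norm norm_minus_commute L_def)
  have zb: "- (1/10) * alpha D * ln L < Re (z - s0 D)" "Re (z - s0 D) < 1/2"
    "\<bar>Im (z - s0 D)\<bar> < 1 + 10 * L"
    using z unfolding Omega2_def L_def by auto
  have al: "alpha D = 1 / L^2" using alpha_eq Lp L_def by simp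
  have sa: "sqrt (alpha D) = 1 / L" using al Lp by (simp add: real_sqrt_divide)
  have lnL: "ln L \<le> L" using Lp ln_le_minus_one[of L] by linarith
  have "(1/10) * alpha D * ln L \<le> 1 / L"
  proof -
    have "(1/10) * alpha D * ln L = (ln L / L) / (10 * L)" using al Lp by (simp add: power2_eq_square)
    also have "\<dots> \<le> 1 / (10 * L)" using lnL Lp by (intro divide_right_mono) auto
    also have "\<dots> \<le> 1 / L" using Lp by (simp add: field_simps)
    finally show ?thesis .
  qed
  moreover have i3: "1 / L \<le> 1/3" using L L_def by (simp add: field_simps)
  moreover have "1 / L \<le> 10 * L" using i3 L L_def by linarith
  moreover have "Re (w - s0 D) = Re (z - s0 D) + Re (w - z)" "Im (w - s0 D) = Im (z - s0 D) + Im (w - z)"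
    by simp_all
  ultimately have "- 2 * sqrt (alpha D) < Re (w - s0 D) \<and> Re (w - s0 D) < 1
                 \<and> \<bar>Im (w - s0 D)\<bar> < 1 + 20 * LL D"
    unfolding sa L_def[symmetric] using dw zb by (simp only: abs_le_iff abs_less_iff) linarith
  then show "w \<in> Omega1 D"
    unfolding Omega1_def by simp
qed

lemma Omega2_sub: assumes "LL D \<ge> 3" shows "Omega2 D \<subseteq> Omega1 D"
proof
  fix z assume z: "z \<in> Omega2 D"
  have "z \<in> cball z (1 / LL D)" using assms by simp
  then show "z \<in> Omega1 D" using cball_sub[OF assms z] by blast
qed


lemma ln_bound:
  assumes L: "L \<ge> (3::real)"
  shows "ln (2 * (L^3 * ln L)) \<le> 5 * ln L"
proof -
  have Lp: "L > 0" using L by simp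
  have l0: "ln L > 0" using L by simp
  have lnL: "ln L \<le> L" using Lp ln_le_minus_one[of L] by linarith
  have "2 * (L^3 * ln L) \<le> 2 * (L^3 * L)" using lnL Lp by (intro mult_left_mono) auto
  also have "\<dots> \<le> L * (L^3 * L)" using L Lp by (intro mult_right_mono) auto
  also have "\<dots> = L^5" by (simp add: power_def)
  finally have le: "2 * (L^3 * ln L) \<le> L^5" .
  have "ln (2 * (L^3 * ln L)) \<le> ln (L^5)"
    using le l0 Lp by (subst ln_le_cancel_iff) auto
  also have "\<dots> = 5 * ln L" using Lp by (simp add: ln_realpow)
  finally show ?thesis .
qed

theorem corollary2p9:
  shows "\<exists>C D0::real. \<forall>D chi. real D > D0 \<and> real_primitive_dchar D chi \<longrightarrow>
     (\<forall>\<psi>\<in>PsiStar D chi. \<forall>s\<in>Omega2 D. \<forall>s'\<in>Omega2 D.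
        cmod (s - s') \<le> 1 / (LL D * ln (LL D)) \<longrightarrow>
        cmod (Fpol D chi s \<psi> / Fpol D chi s' \<psi> - 1) \<le> C * (cmod (s - s') * LL D * ln (LL D)))"
proof (intro exI allI impI ballI)
  fix D :: nat and chi \<psi> s s'
  assume D: "real D > 27 \<and> real_primitive_dchar D chi" and psi: "\<psi> \<in> PsiStar D chi"
    and s: "s \<in> Omega2 D" and s': "s' \<in> Omega2 D"
    and ss: "cmod (s - s') \<le> 1 / (LL D * ln (LL D))"
  define L where "L = LL D"
  define l where "l = ln L"
  define K where "K = L^3 * l"
  define F where "F z = Fpol D chi z \<psi>" for z
  define G where "G z = Gpol D chi z \<psi>" for z
  have "exp (3::real) \<le> 27"
  proof -
    have "exp (1::real) \<le> 3" using exp_le by simp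
    then have "exp (1::real) ^ 3 \<le> 3 ^ 3" by (intro power_mono) auto
    then show ?thesis by (simp add: exp_of_nat_mult[symmetric])
  qed
  then have "exp 3 < real D" using D by linarith
  then have "ln (exp 3) < ln (real D)" using D by (subst ln_less_cancel_iff) auto
  then have L3: "L \<ge> 3" unfolding L_def LL_def by simp
  have Lp: "L > 0" using L3 by simp
  have l1: "l \<ge> 1"
  proof -
    have "exp (1::real) \<le> L" using exp_le L3 by linarith
    then have "ln (exp 1) \<le> ln L" using Lp by (subst ln_le_cancel_iff) auto
    then show ?thesis unfolding l_def by simp
  qed
  have K27: "K \<ge> 27"
  proof -
    have "(3::real)^3 \<le> L^3" using L3 by (intro power_mono) auto
    then have "(3::real)^3 * 1 \<le> L^3 * l" using l1 Lp by (intro mult_mono) auto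
    then show ?thesis unfolding K_def by simp
  qed
  have psi': "(SUP s\<in>Omega1 D. cmod (F s) + cmod (G s)) < K"
     "(SUP s\<in>Omega1 D. cmod (F s * G s - 1)) < 1/2"
    using psi unfolding PsiStar_def F_def G_def K_def l_def L_def by auto
  have contF: "continuous_on UNIV F" unfolding F_def
    using Fpol_holo holomorphic_on_imp_continuous_on by blast
  have contG: "continuous_on UNIV G" unfolding G_def
    using Gpol_holo holomorphic_on_imp_continuous_on by blast
  have b1: "cmod (F z) + cmod (G z) < K" if "z \<in> Omega1 D" for z
  proof -
    have "bdd_above ((\<lambda>s. cmod (F s) + cmod (G s)) ` Omega1 D)"
      by (intro bdd_cont continuous_intros contF contG)
    from cSUP_upper[OF that this] psi'(1) show ?thesis by linarith
  qed
  have b2: "cmod (F z * G z - 1) < 1/2" if "z \<in> Omega1 D" for z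
  proof -
    have "bdd_above ((\<lambda>s. cmod (F s * G s - 1)) ` Omega1 D)"
      by (intro bdd_cont continuous_intros contF contG)
    from cSUP_upper[OF that this] psi'(2) show ?thesis by linarith
  qed
  have Fb: "cmod (F z) < K \<and> 1 / (2 * K) < cmod (F z)" if z: "z \<in> Omega1 D" for z
  proof -
    have g: "cmod (G z) < K" "cmod (F z) < K" using b1[OF z] norm_ge_zero[of "F z"] norm_ge_zero[of "G z"] by linarith+
    have "1 - cmod (F z * G z) \<le> cmod (F z * G z - 1)"
      using norm_triangle_ineq2[of 1 "F z * G z"] by (simp add: norm_minus_commute)
    then have "cmod (F z) * cmod (G z) > 1/2" using b2[OF z] by (simp add: norm_mult)
    moreover have "cmod (F z) * cmod (G z) \<le> cmod (F z) * K"
      using g by (intro mult_left_mono) auto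
    ultimately have "cmod (F z) * K > 1/2" by linarith
    then have "1 / (2 * K) < cmod (F z)" using K27 by (simp add: field_simps)
    then show ?thesis using g by simp
  qed
  have Fnz: "F z \<noteq> 0" if "z \<in> Omega1 D" for z
    using Fb[OF that] K27 by (auto simp: divide_pos_pos)
  have sO1: "s \<in> Omega1 D" using Omega2_sub[of D] L3 s unfolding L_def by blast
  obtain lF where holl: "lF holomorphic_on Omega1 D" and expl: "\<And>z. z \<in> Omega1 D \<Longrightarrow> exp (lF z) = F z"
  proof -
    have holF: "F holomorphic_on Omega1 D" unfolding F_def by (rule Fpol_holo)
    show ?thesis using holomorphic_logarithm_exists[OF Omega1_convex Omega1_open holF Fnz sO1] that by blast
  qed
  have reb: "- ln (2 * K) < Re (lF z) \<and> Re (lF z) < ln (2 * K)" if z: "z \<in> Omega1 D" for z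
  proof -
    have e: "exp (Re (lF z)) = cmod (F z)" by (subst expl[OF z, symmetric]) (simp only: norm_exp_eq_Re)
    have "Re (lF z) = ln (cmod (F z))" unfolding e[symmetric] by simp
    moreover have "ln (cmod (F z)) < ln K" using Fb[OF z] Fnz[OF z] K27 by (subst ln_less_cancel_iff) auto
    moreover have "ln K < ln (2 * K)" using K27 by simp
    moreover have "ln (1 / (2 * K)) < ln (cmod (F z))" using Fb[OF z] Fnz[OF z] K27 by (subst ln_less_cancel_iff) auto
    moreover have "ln (1 / (2 * K)) = - ln (2 * K)" using K27 by (simp add: ln_div)
    ultimately show ?thesis by linarith
  qed
  define A where "A = 2 * ln (2 * K)"
  have Ap: "A > 0" unfolding A_def using K27 by simp
  have A5: "A \<le> 10 * l" unfolding A_def K_def l_def using ln_bound[OF L3] by simp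
  have dbound: "cmod (deriv lF z) \<le> 20 * L * l" if z: "z \<in> Omega2 D" for z
  proof -
    have sub: "cball z (1 / L) \<subseteq> Omega1 D" using cball_sub[OF _ z] L3 unfolding L_def by simp
    have zz: "z \<in> Omega1 D" using sub Lp by (meson centre_in_cball less_eq_real_def subsetD zero_less_divide_1_iff)
    have "cmod (deriv lF z) \<le> 2 * A / (1 / L)"
    proof (rule deriv_bound[OF holl Omega1_open sub])
      show "0 < 1 / L" using Lp by simp
      show "0 < A" by (rule Ap)
      fix w assume "w \<in> cball z (1 / L)"
      then have "w \<in> Omega1 D" using sub by blast
      from reb[OF this] reb[OF zz] show "Re (lF w - lF z) \<le> A" unfolding A_def minus_complex.sel by linarith
    qed
    also have "\<dots> = 2 * A * L" by simp
    also have "\<dots> \<le> 2 * (10 * l) * L" using A5 Lp by (intro mult_right_mono) auto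
    finally show ?thesis by (simp add: algebra_simps)
  qed
  have diffb: "cmod (lF s - lF s') \<le> 20 * L * l * cmod (s - s')"
  proof (rule field_differentiable_bound[OF Omega2_convex _ dbound s s'])
    fix z assume "z \<in> Omega2 D"
    then have "z \<in> Omega1 D" using Omega2_sub[of D] L3 unfolding L_def by blast
    then show "(lF has_field_derivative deriv lF z) (at z within Omega2 D)"
      using holomorphic_derivI[OF holl Omega1_open] has_field_derivative_at_within by blast
  qed
  have "20 * L * l * cmod (s - s') \<le> 20 * L * l * (1 / (L * l))"
  proof -
    have "0 \<le> 20 * L * l" using Lp l1 by simp
    moreover have "cmod (s - s') \<le> 1 / (L * l)" using ss unfolding L_def l_def .
    ultimately show ?thesis by (rule mult_left_mono[rotated])
  qed
  also have "\<dots> = 20" using Lp l1 by simp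
  finally have w20: "cmod (lF s - lF s') \<le> 20" using diffb by linarith
  have sO1': "s' \<in> Omega1 D" using Omega2_sub[of D] L3 s' unfolding L_def by blast
  have "F s / F s' = exp (lF s - lF s')" using expl[OF sO1] expl[OF sO1'] by (simp add: exp_diff)
  then have "cmod (F s / F s' - 1) \<le> exp (cmod (lF s - lF s')) * cmod (lF s - lF s')"
    using exp_sub1_bound by simp
  also have "\<dots> \<le> exp 20 * (20 * L * l * cmod (s - s'))"
    using w20 diffb by (intro mult_mono) auto
  finally show "cmod (Fpol D chi s \<psi> / Fpol D chi s' \<psi> - 1) \<le> (20 * exp 20) * (cmod (s - s') * LL D * ln (LL D))"
    unfolding F_def L_def l_def by (simp add: algebra_simps)
qed


end
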